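(* Let $K>0$, $D>0$, $\sigma>0$, $r\in\mathbf{R}$ and $0<\tau<T$. For $S_->0$ define \[ V(S_-,\tau)=\begin{cases}(S_--D)\,N\!\left(\bar d+\sigma\sqrt{T-\tau}\right)-Ke^{-r(T-\tau)}N(\bar d), & S_->D,\\ 0, & S_-\le D,\end{cases} \qquad \bar d=\frac{\ln(S_--D)-\ln K+\left(r-\frac12\sigma^2\right)(T-\tau)}{\sigma\sqrt{T-\tau}}, \] where $N$ is the standard normal cumulative distribution function. Fix $S^*>D$ and an integer $M\ge1$; set $S_i=D+i\,\frac{S^*-D}{M}$ for $i=0,\dots,M$ and \[ \alpha_i=\frac{M}{S^*-D}\left[V(S_i,\tau)-V(S_{i-1},\tau)\right],\quad i=1,\dots,M . \] Define \[ V_1^+(S_-,\tau)=\sum_{i=1}^M\left[\alpha_i(S_--S_{i-1})+V(S_{i-1},\tau)\right]\chi_{[S_{i-1},S_i]}(S_-),\qquad V_2^+(S_-,\tau)=\left[(S_--S^* )+V(S^*,\tau)\right]\chi_{[S^*,\infty)}(S_-), \] where $\chi_I$ is the characteristic function of the set $I$. Then $V(S_-,\tau)\le V_1^+(S_-,\tau)+V_2^+(S_-,\tau)$ for all $S_->D$, and the function $V_1^++V_2^+$ is piecewise linear and non-negative. If $S_-\le D$, then $V(S_-,\tau)=0$.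
   Context: $V(S_-,\tau)$ is the value, just before a dividend $D$ is paid at time $\tau$, of a European call option with strike $K$ and maturity $T$ in a Black-Scholes economy (risk-free rate $r$, volatility $\sigma$), as a function of the stock price $S_-$ just before the dividend payment. Note $V(S_0,\tau)=V(D,\tau)=0$. *)

theory Defs
  imports "HOL-Probability.Probability"
begin

definition Ncdf :: "real \<Rightarrow> real" where
  "Ncdf = cdf (density lborel std_normal_density)"

definition dbar :: "real \<Rightarrow> real \<Rightarrow> real \<Rightarrow> real \<Rightarrow> real \<Rightarrow> real \<Rightarrow> real \<Rightarrow> real" where
  "dbar K D r \<sigma> T \<tau> S =
     (ln (S - D) - ln K + (r - \<sigma>^2 / 2) * (T - \<tau>)) / (\<sigma> * sqrt (T - \<tau>))"

text \<open>Value of the call just before the dividend, as a function of S_-.\<close>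
definition Vcall :: "real \<Rightarrow> real \<Rightarrow> real \<Rightarrow> real \<Rightarrow> real \<Rightarrow> real \<Rightarrow> real \<Rightarrow> real" where
  "Vcall K D r \<sigma> T \<tau> S =
     (if S > D then
        (S - D) * Ncdf (dbar K D r \<sigma> T \<tau> S + \<sigma> * sqrt (T - \<tau>))
        - K * exp (- r * (T - \<tau>)) * Ncdf (dbar K D r \<sigma> T \<tau> S)
      else 0)"

definition chi :: "real set \<Rightarrow> real \<Rightarrow> real" where
  "chi I x = (if x \<in> I then 1 else 0)"

definition piecewise_linear :: "(real \<Rightarrow> real) \<Rightarrow> bool" where
  "piecewise_linear f \<longleftrightarrow> (\<exists>P. finite P \<and>
     (\<forall>I. is_interval I \<and> I \<inter> P = {} \<longrightarrow> (\<exists>a b. \<forall>x\<in>I. f x = a * x + b)))"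

end

theory Submission imports Defs begin

lemma Ncdf_rd: "real_distribution (density lborel std_normal_density)"
  by (rule real_dist_normal_dist)

lemma Ncdf_fb: "finite_borel_measure (density lborel std_normal_density)"
  by (rule real_distribution.finite_borel_measure_M[OF Ncdf_rd])

lemma Ncdf_mono: "x \<le> y \<Longrightarrow> Ncdf x \<le> Ncdf y"
  unfolding Ncdf_def using finite_borel_measure.cdf_nondecreasing[OF Ncdf_fb] by blast

lemma Ncdf_nonneg: "0 \<le> Ncdf x"
  unfolding Ncdf_def using finite_borel_measure.cdf_nonneg[OF Ncdf_fb] by blast

lemma Ncdf_le1: "Ncdf x \<le> 1"
  unfolding Ncdf_def using real_distribution.cdf_bounded_prob[OF Ncdf_rd] by blast

lemma Ncdf_at_bot: "(Ncdf \<longlongrightarrow> 0) at_bot"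
  unfolding Ncdf_def using finite_borel_measure.cdf_lim_at_bot[OF Ncdf_fb] by blast

lemma Ncdf_diff: assumes "a < y" shows "Ncdf y - Ncdf a = (LBINT t=a..y. std_normal_density t)"
proof -
  have "Ncdf y - Ncdf a = measure (density lborel std_normal_density) {a<..y}"
    unfolding Ncdf_def using finite_borel_measure.cdf_diff_eq[OF Ncdf_fb assms] by blast
  also have "\<dots> = (LINT t|density lborel std_normal_density. indicator {a<..y} t)"
    by simp
  also have "\<dots> = (LINT t|lborel. std_normal_density t *\<^sub>R indicator {a<..y} t)"
    by (subst integral_density) auto
  also have "\<dots> = (LBINT t:{a<..y}. std_normal_density t)"
    unfolding set_lebesgue_integral_def by (simp add: mult.commute)
  also have "\<dots> = (LBINT t=a..y. std_normal_density t)"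
    using assms by (simp add: interval_integral_Ioc)
  finally show ?thesis .
qed

lemma Ncdf_deriv: "(Ncdf has_real_derivative std_normal_density x) (at x)"
proof -
  have c: "continuous_on {x-1..x+1} std_normal_density"
    unfolding std_normal_density_def by (intro continuous_intros) auto
  have "((\<lambda>u. LBINT y=(x-1)..u. std_normal_density y) has_vector_derivative (std_normal_density x)) (at x within {x-1..x+1})"
    by (rule interval_integral_FTC2[OF _ _ c]) auto
  then have "((\<lambda>u. LBINT y=(x-1)..u. std_normal_density y) has_real_derivative (std_normal_density x)) (at x)"
    by (simp add: at_within_Icc_at has_real_derivative_iff_has_vector_derivative)
  then have "((\<lambda>u. Ncdf (x-1) + (LBINT y=(x-1)..u. std_normal_density y)) has_real_derivative (std_normal_density x)) (at x)"
    by (auto intro!: derivative_eq_intros)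
  then show ?thesis
    by (rule has_field_derivative_transform_within_open[where S="{x-1<..}"]) (auto simp: Ncdf_diff[symmetric])
qed

context
  fixes K D r \<sigma> T \<tau> :: real
  assumes K: "K > 0" and sg: "\<sigma> > 0" and tt: "\<tau> < T"
begin

lemma v_pos: "\<sigma> * sqrt (T - \<tau>) > 0"
  using sg tt by simp

lemma phi_ident:
  assumes x: "x > D"
  shows "(x - D) * std_normal_density (dbar K D r \<sigma> T \<tau> x + \<sigma> * sqrt (T - \<tau>))
       = K * exp (- r * (T - \<tau>)) * std_normal_density (dbar K D r \<sigma> T \<tau> x)"
proof -
  define v where "v = \<sigma> * sqrt (T - \<tau>)"
  define d where "d = dbar K D r \<sigma> T \<tau> x"
  have v: "v > 0" using v_pos v_def by simp
  have v2: "v^2 = \<sigma>^2 * (T - \<tau>)" using tt by (simp add: v_def power_mult_distrib)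
  have dv: "d * v = ln (x - D) - ln K + (r - \<sigma>^2 / 2) * (T - \<tau>)"
    using v unfolding d_def dbar_def v_def[symmetric] by simp
  have arg: "ln (x - D) + (- ((d + v)^2) / 2) = ln K + (- r * (T - \<tau>)) + (- (d^2) / 2)"
  proof -
    have e: "(d + v)^2 = d^2 + 2 * (d * v) + v^2" by (simp add: power2_eq_square algebra_simps)
    show ?thesis unfolding e dv v2 by (simp add: field_simps)
  qed
  have l: "exp (ln (x - D) + (- ((d + v)^2) / 2)) = (x - D) * exp (- ((d + v)^2) / 2)"
    by (subst exp_add) (use x in simp)
  have rr: "exp (ln K + (- r * (T - \<tau>)) + (- (d^2) / 2)) = K * exp (- r * (T - \<tau>)) * exp (- (d^2) / 2)"
    by (subst exp_add, subst exp_add) (use K in simp)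
  have "(x - D) * exp (- ((d + v)^2) / 2) = K * exp (- r * (T - \<tau>)) * exp (- (d^2) / 2)"
    using arg l rr by metis
  then show ?thesis unfolding std_normal_density_def d_def[symmetric] v_def[symmetric]
    by (simp add: field_simps)
qed

lemma dbar_deriv:
  assumes x: "x > D"
  shows "(dbar K D r \<sigma> T \<tau> has_real_derivative 1 / ((x - D) * (\<sigma> * sqrt (T - \<tau>)))) (at x)"
proof -
  have "((\<lambda>y. (ln (y - D) - ln K + (r - \<sigma>^2 / 2) * (T - \<tau>)) / (\<sigma> * sqrt (T - \<tau>)))
     has_real_derivative (1 / (x - D)) / (\<sigma> * sqrt (T - \<tau>))) (at x)"
    using x sg tt by (auto intro!: derivative_eq_intros)
  then show ?thesis unfolding dbar_def[abs_def] by simp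
qed

lemma V_deriv:
  assumes x: "x > D"
  shows "(Vcall K D r \<sigma> T \<tau> has_real_derivative Ncdf (dbar K D r \<sigma> T \<tau> x + \<sigma> * sqrt (T - \<tau>))) (at x)"
proof -
  define v where "v = \<sigma> * sqrt (T - \<tau>)"
  define d where "d = dbar K D r \<sigma> T \<tau>"
  define KK where "KK = K * exp (- r * (T - \<tau>))"
  have dd: "(d has_real_derivative 1 / ((x - D) * v)) (at x)"
    using dbar_deriv[OF x] unfolding d_def v_def .
  have dd2: "((\<lambda>y. d y + v) has_real_derivative 1 / ((x - D) * v)) (at x)"
    using dd by (auto intro!: derivative_eq_intros)
  have n1: "((\<lambda>y. Ncdf (d y + v)) has_real_derivative std_normal_density (d x + v) * (1 / ((x - D) * v))) (at x)"
    using DERIV_chain2[OF Ncdf_deriv dd2] .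
  have n2: "((\<lambda>y. Ncdf (d y)) has_real_derivative std_normal_density (d x) * (1 / ((x - D) * v))) (at x)"
    using DERIV_chain2[OF Ncdf_deriv dd] .
  have g: "((\<lambda>y. (y - D) * Ncdf (d y + v) - KK * Ncdf (d y)) has_real_derivative
      1 * Ncdf (d x + v) + (x - D) * (std_normal_density (d x + v) * (1 / ((x - D) * v)))
      - KK * (std_normal_density (d x) * (1 / ((x - D) * v)))) (at x)"
  proof -
    have dl: "((\<lambda>y. y - D) has_real_derivative 1) (at x)" by (auto intro!: derivative_eq_intros)
    show ?thesis using DERIV_diff[OF DERIV_mult[OF dl n1] DERIV_cmult[OF n2, of KK]] by simp
  qed
  have id: "(x - D) * std_normal_density (d x + v) = KK * std_normal_density (d x)"
    using phi_ident[OF x] unfolding d_def v_def KK_def .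
  have "1 * Ncdf (d x + v) + (x - D) * (std_normal_density (d x + v) * (1 / ((x - D) * v)))
      - KK * (std_normal_density (d x) * (1 / ((x - D) * v))) = Ncdf (d x + v)"
  proof -
    have "(x - D) * (std_normal_density (d x + v) * (1 / ((x - D) * v))) = 
       ((x - D) * std_normal_density (d x + v)) * (1 / ((x - D) * v))" by simp
    also have "\<dots> = KK * (std_normal_density (d x) * (1 / ((x - D) * v)))" using id by simp
    finally show ?thesis by simp
  qed
  with g have g': "((\<lambda>y. (y - D) * Ncdf (d y + v) - KK * Ncdf (d y)) has_real_derivative Ncdf (d x + v)) (at x)"
    by simp
  have "(Vcall K D r \<sigma> T \<tau> has_real_derivative Ncdf (d x + v)) (at x)"
    by (rule has_field_derivative_transform_within_open[OF g', where S="{D<..}"])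
      (use x in \<open>auto simp: Vcall_def d_def v_def KK_def\<close>)
  then show ?thesis unfolding d_def v_def .
qed


lemma dbar_lim: "filterlim (dbar K D r \<sigma> T \<tau>) at_bot (at_right D)"
proof -
  define v where "v = \<sigma> * sqrt (T - \<tau>)"
  define c where "c = - ln K + (r - \<sigma>^2 / 2) * (T - \<tau>)"
  have v: "v > 0" using v_pos v_def by simp
  have h: "filterlim (\<lambda>y. y - D) (at_right 0) (at_right D)"
    unfolding filterlim_at
  proof
    show "\<forall>\<^sub>F x in at_right D. x - D \<in> {0<..} \<and> x - D \<noteq> 0"
      using eventually_at_right_less[of D] by (auto elim: eventually_mono)
    show "((\<lambda>y. y - D) \<longlongrightarrow> 0) (at_right D)"
      by (rule tendsto_eq_intros | simp)+
  qed
  have l: "filterlim (\<lambda>y. ln (y - D)) at_bot (at_right D)"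
    by (rule filterlim_compose[OF ln_at_0 h])
  have l2: "filterlim (\<lambda>y. c + ln (y - D)) at_bot (at_right D)"
    by (subst filterlim_tendsto_add_at_bot_iff[OF tendsto_const]) (rule l)
  have l3: "filterlim (\<lambda>y. (1 / v) * (c + ln (y - D))) at_bot (at_right D)"
    by (rule filterlim_tendsto_pos_mult_at_bot[OF tendsto_const _ l2]) (use v in simp)
  have e: "dbar K D r \<sigma> T \<tau> y = (1 / v) * (c + ln (y - D))" for y
  proof -
    have "ln (y - D) - ln K + (r - \<sigma>^2 / 2) * (T - \<tau>) = c + ln (y - D)" by (simp add: c_def)
    then show ?thesis unfolding dbar_def v_def by simp
  qed
  have "dbar K D r \<sigma> T \<tau> = (\<lambda>y. (1 / v) * (c + ln (y - D)))"
    using e by blast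
  with l3 show ?thesis by simp
qed

lemma V_isCont: "D < u \<Longrightarrow> isCont (Vcall K D r \<sigma> T \<tau>) u"
  by (rule DERIV_isCont[OF V_deriv])

lemma V_cont_on: "D < a \<Longrightarrow> continuous_on {a..b} (Vcall K D r \<sigma> T \<tau>)"
  by (intro continuous_at_imp_continuous_on ballI V_isCont) auto

lemma V_nonneg: "Vcall K D r \<sigma> T \<tau> x \<ge> 0"
proof (cases "x > D")
  case False
  then show ?thesis by (simp add: Vcall_def)
next
  case True
  define KK where "KK = K * exp (- r * (T - \<tau>))"
  have lim: "((\<lambda>y. - KK * Ncdf (dbar K D r \<sigma> T \<tau> y)) \<longlongrightarrow> - KK * 0) (at_right D)"
    by (intro tendsto_mult tendsto_const filterlim_compose[OF Ncdf_at_bot dbar_lim])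
  have ev: "\<forall>\<^sub>F y in at_right D. - KK * Ncdf (dbar K D r \<sigma> T \<tau> y) \<le> Vcall K D r \<sigma> T \<tau> x"
  proof -
    have "\<forall>\<^sub>F y in at_right D. y < x" using True eventually_at_right[of D] by blast
    moreover have "\<forall>\<^sub>F y in at_right D. y > D" by (simp add: eventually_at_right_less)
    ultimately show ?thesis
    proof eventually_elim
      case (elim y)
      have "- KK * Ncdf (dbar K D r \<sigma> T \<tau> y) \<le> Vcall K D r \<sigma> T \<tau> y"
        using elim by (simp add: Vcall_def KK_def Ncdf_nonneg)
      also have "\<dots> \<le> Vcall K D r \<sigma> T \<tau> x"
      proof (rule DERIV_nonneg_imp_increasing_open[where f="Vcall K D r \<sigma> T \<tau>"])
        show "y \<le> x" using elim by simp
        show "\<exists>z. (Vcall K D r \<sigma> T \<tau> has_real_derivative z) (at u) \<and> 0 \<le> z" if "y < u" "u < x" for u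
          using V_deriv[of u] that elim Ncdf_nonneg by auto
        show "continuous_on {y..x} (Vcall K D r \<sigma> T \<tau>)"
          using V_cont_on elim by blast
      qed
      finally show ?case .
    qed
  qed
  have "- KK * 0 \<le> Vcall K D r \<sigma> T \<tau> x"
    using tendsto_upperbound[OF lim ev] by simp
  then show ?thesis by simp
qed

lemma V_convex: "convex_on {D<..} (Vcall K D r \<sigma> T \<tau>)"
proof (rule convex_on_realI[where f'="\<lambda>x. Ncdf (dbar K D r \<sigma> T \<tau> x + \<sigma> * sqrt (T - \<tau>))"])
  show "connected {D<..}" by simp
  show "(Vcall K D r \<sigma> T \<tau> has_real_derivative Ncdf (dbar K D r \<sigma> T \<tau> x + \<sigma> * sqrt (T - \<tau>))) (at x)"
    if "x \<in> {D<..}" for x using V_deriv that by simp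
  show "Ncdf (dbar K D r \<sigma> T \<tau> x + \<sigma> * sqrt (T - \<tau>)) \<le> Ncdf (dbar K D r \<sigma> T \<tau> y + \<sigma> * sqrt (T - \<tau>))"
    if "x \<in> {D<..}" "y \<in> {D<..}" "x \<le> y" for x y
  proof (rule Ncdf_mono)
    have "ln (x - D) \<le> ln (y - D)" using that by simp
    then show "dbar K D r \<sigma> T \<tau> x + \<sigma> * sqrt (T - \<tau>) \<le> dbar K D r \<sigma> T \<tau> y + \<sigma> * sqrt (T - \<tau>)"
      unfolding dbar_def using v_pos by (simp add: divide_right_mono)
  qed
qed

lemma V_ratio_mono:
  assumes "D < x" "x \<le> y"
  shows "Vcall K D r \<sigma> T \<tau> x / (x - D) \<le> Vcall K D r \<sigma> T \<tau> y / (y - D)"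
proof (rule DERIV_nonneg_imp_increasing_open[where f="\<lambda>z. Vcall K D r \<sigma> T \<tau> z / (z - D)", OF assms(2)])
  fix u assume u: "x < u" "u < y"
  let ?N = "Ncdf (dbar K D r \<sigma> T \<tau> u + \<sigma> * sqrt (T - \<tau>))"
  have "((\<lambda>z. Vcall K D r \<sigma> T \<tau> z / (z - D)) has_real_derivative
      (?N * (u - D) - Vcall K D r \<sigma> T \<tau> u * 1) / ((u - D) * (u - D))) (at u)"
    by (rule DERIV_divide[OF V_deriv]) (use u assms in \<open>auto intro!: derivative_eq_intros\<close>)
  moreover have "?N * (u - D) - Vcall K D r \<sigma> T \<tau> u * 1 = K * exp (- r * (T - \<tau>)) * Ncdf (dbar K D r \<sigma> T \<tau> u)"
    using u assms by (simp add: Vcall_def algebra_simps)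
  moreover have "K * exp (- r * (T - \<tau>)) * Ncdf (dbar K D r \<sigma> T \<tau> u) \<ge> 0"
    using K Ncdf_nonneg by simp
  ultimately show "\<exists>z. ((\<lambda>z. Vcall K D r \<sigma> T \<tau> z / (z - D)) has_real_derivative z) (at u) \<and> 0 \<le> z"
    by auto
next
  show "continuous_on {x..y} (\<lambda>z. Vcall K D r \<sigma> T \<tau> z / (z - D))"
    using assms by (intro continuous_at_imp_continuous_on ballI continuous_intros V_isCont) auto
qed

lemma V_lip:
  assumes "D < x" "x \<le> y"
  shows "Vcall K D r \<sigma> T \<tau> y \<le> Vcall K D r \<sigma> T \<tau> x + (y - x)"
proof -
  have "x - Vcall K D r \<sigma> T \<tau> x \<le> y - Vcall K D r \<sigma> T \<tau> y"
  proof (rule DERIV_nonneg_imp_increasing_open[where f="\<lambda>z. z - Vcall K D r \<sigma> T \<tau> z", OF assms(2)])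
    fix u assume u: "x < u" "u < y"
    have "((\<lambda>z. z - Vcall K D r \<sigma> T \<tau> z) has_real_derivative
        1 - Ncdf (dbar K D r \<sigma> T \<tau> u + \<sigma> * sqrt (T - \<tau>))) (at u)"
      using u assms by (auto intro!: derivative_eq_intros V_deriv)
    then show "\<exists>z. ((\<lambda>z. z - Vcall K D r \<sigma> T \<tau> z) has_real_derivative z) (at u) \<and> 0 \<le> z"
      using Ncdf_le1 by auto
  next
    show "continuous_on {x..y} (\<lambda>z. z - Vcall K D r \<sigma> T \<tau> z)"
      using assms by (intro continuous_at_imp_continuous_on ballI continuous_intros V_isCont) auto
  qed
  then show ?thesis by simp
qed
end


lemma interval_between:
  assumes I: "is_interval (I::real set)" and "u \<in> I" "w \<in> I" "u \<le> z" "z \<le> w"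
  shows "z \<in> I"
  using assms unfolding is_interval_1 by blast

lemma chi_const_Icc:
  assumes I: "is_interval I" and a: "a \<notin> I" and b: "b \<notin> I"
  shows "\<exists>c. \<forall>x\<in>I. chi {a..b} x = c"
proof (cases "\<exists>x\<in>I. x \<in> {a..b}")
  case True
  then obtain x where x: "x \<in> I" "a \<le> x" "x \<le> b" by auto
  have "y \<in> {a..b}" if y: "y \<in> I" for y
  proof (rule ccontr)
    assume n: "y \<notin> {a..b}"
    show False
    proof (cases "y < a")
      case True
      have "a \<in> I" by (rule interval_between[OF I y x(1)]) (use True x in auto)
      then show False using a by simp
    next
      case False
      then have "b < y" using n by auto
      have "b \<in> I" by (rule interval_between[OF I x(1) y]) (use \<open>b < y\<close> x in auto)
      then show False using b by simp
    qed
  qed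
  then have "\<forall>x\<in>I. chi {a..b} x = 1" unfolding chi_def by simp
  then show ?thesis by blast
next
  case False
  then have "\<forall>x\<in>I. chi {a..b} x = 0" unfolding chi_def by simp
  then show ?thesis by blast
qed

lemma chi_const_Ici:
  assumes I: "is_interval I" and a: "a \<notin> I"
  shows "\<exists>c. \<forall>x\<in>I. chi {a..} x = c"
proof (cases "\<exists>x\<in>I. x \<in> {a..}")
  case True
  then obtain x where x: "x \<in> I" "a \<le> x" by auto
  have "y \<in> {a..}" if y: "y \<in> I" for y
  proof (rule ccontr)
    assume "y \<notin> {a..}"
    then have "y < a" by simp
    have "a \<in> I" by (rule interval_between[OF I y x(1)]) (use \<open>y < a\<close> x in auto)
    then show False using a by simp
  qed
  then have "\<forall>x\<in>I. chi {a..} x = 1" unfolding chi_def by simp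
  then show ?thesis by blast
next
  case False
  then have "\<forall>x\<in>I. chi {a..} x = 0" unfolding chi_def by simp
  then show ?thesis by blast
qed

theorem lemma2:
  fixes K D \<sigma> r T \<tau> Sstar :: real and M :: nat
  assumes "K > 0" "D > 0" "\<sigma> > 0" "0 < \<tau>" "\<tau> < T"
    and "Sstar > D" and "M \<ge> 1"
  defines "V \<equiv> Vcall K D r \<sigma> T \<tau>"
    and "S \<equiv> (\<lambda>i::nat. D + real i * (Sstar - D) / real M)"
  defines "\<alpha> \<equiv> (\<lambda>i::nat. real M / (Sstar - D) * (V (S i) - V (S (i - 1))))"
  defines "V1 \<equiv> (\<lambda>x. \<Sum>i=1..M. (\<alpha> i * (x - S (i - 1)) + V (S (i - 1))) * chi {S (i - 1)..S i} x)"
    and "V2 \<equiv> (\<lambda>x. ((x - Sstar) + V Sstar) * chi {Sstar..} x)"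
  shows "(\<forall>x > D. V x \<le> V1 x + V2 x)
    \<and> piecewise_linear (\<lambda>x. V1 x + V2 x)
    \<and> (\<forall>x. V1 x + V2 x \<ge> 0)
    \<and> (\<forall>x \<le> D. V x = 0)"
proof -
  note K = assms(1) and sg = assms(3) and tt = assms(5) and SD = assms(6) and M1 = assms(7)
  define h where "h = (Sstar - D) / real M"
  have h: "h > 0" using SD M1 by (simp add: h_def)
  have Sh: "S i = D + real i * h" for i by (simp add: S_def h_def)
  have S0: "S 0 = D" by (simp add: Sh)
  have SM: "S M = Sstar" using M1 by (simp add: Sh h_def)
  have Sdiff: "S i - S (i - 1) = h" if "i \<ge> 1" for i
    using that by (simp add: Sh of_nat_diff algebra_simps)
  have Smono: "S i \<le> S j" if "i \<le> j" for i j
    using that h by (simp add: Sh mult_right_mono)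
  have Vnn: "V x \<ge> 0" for x unfolding V_def by (rule V_nonneg[OF K sg tt])
  have Vle: "V x = 0" if "x \<le> D" for x using that by (simp add: V_def Vcall_def)
  have alpha: "\<alpha> i = (V (S i) - V (S (i - 1))) / h" for i
    by (simp add: \<alpha>_def h_def)
  have term_eq: "\<alpha> i * (x - S (i - 1)) + V (S (i - 1)) =
      (1 - (x - S (i - 1)) / h) * V (S (i - 1)) + ((x - S (i - 1)) / h) * V (S i)" for i x
    using h by (simp add: alpha field_simps)
  have term_nn: "0 \<le> (\<alpha> i * (x - S (i - 1)) + V (S (i - 1))) * chi {S (i - 1)..S i} x"
    if i: "i \<in> {1..M}" for i x
  proof (cases "x \<in> {S (i - 1)..S i}")
    case True
    define t where "t = (x - S (i - 1)) / h"
    have t0: "0 \<le> t" using True h by (simp add: t_def)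
    have t1: "t \<le> 1" using True h Sdiff[of i] i by (simp add: t_def)
    have "0 \<le> (1 - t) * V (S (i - 1)) + t * V (S i)"
      using t0 t1 Vnn by (intro add_nonneg_nonneg mult_nonneg_nonneg) auto
    moreover have "\<alpha> i * (x - S (i - 1)) + V (S (i - 1)) = (1 - t) * V (S (i - 1)) + t * V (S i)"
      unfolding t_def by (rule term_eq)
    ultimately show ?thesis using True by (simp add: chi_def)
  next
    case False
    then have "chi {S (i - 1)..S i} x = 0" by (simp add: chi_def)
    then show ?thesis by simp
  qed
  have V1nn: "V1 x \<ge> 0" for x
    unfolding V1_def by (rule sum_nonneg) (use term_nn in blast)
  have V2nn: "V2 x \<ge> 0" for x
    using Vnn[of Sstar] by (simp add: V2_def chi_def)
  have part1: "V x \<le> V1 x + V2 x" if x: "x > D" for x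
  proof (cases "x \<ge> Sstar")
    case True
    have "V x \<le> V Sstar + (x - Sstar)"
      unfolding V_def by (rule V_lip[OF K sg tt SD True])
    also have "\<dots> = V2 x" using True by (simp add: V2_def chi_def)
    also have "\<dots> \<le> V1 x + V2 x" using V1nn[of x] by simp
    finally show ?thesis .
  next
    case False
    define q where "q = (x - D) / h"
    have q0: "q > 0" using x h by (simp add: q_def)
    have Mh: "real M * h = Sstar - D" using M1 by (simp add: h_def)
    have qM: "q < real M" using False h Mh by (simp add: q_def pos_divide_less_eq)
    define i where "i = nat \<lceil>q\<rceil>"
    have cq1: "of_int \<lceil>q\<rceil> - 1 < q" by (rule conjunct1[OF ceiling_correct])
    have cq2: "q \<le> of_int \<lceil>q\<rceil>" by (rule conjunct2[OF ceiling_correct])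
    note cq = cq1 cq2
    have cpos: "0 < \<lceil>q\<rceil>"
    proof -
      have "(0::real) < of_int \<lceil>q\<rceil>" using cq q0 by linarith
      then show ?thesis by (simp only: of_int_0_less_iff)
    qed
    have cM: "\<lceil>q\<rceil> \<le> int M" using qM by (simp only: ceiling_le_iff of_int_of_nat_eq less_imp_le)
    have i1: "i \<ge> 1" using cpos unfolding i_def by linarith
    have iM: "i \<le> M" using cM unfolding i_def by linarith
    have ri: "real i = real_of_int \<lceil>q\<rceil>" unfolding i_def using cpos by (simp only: of_nat_nat less_imp_le)
    have qi: "q \<le> real i" using ri by simp
    have qi2: "real i - 1 < q" using ri by linarith
    have xSi: "x \<le> S i"
    proof -
      have "x = D + q * h" using h by (simp add: q_def)
      also have "\<dots> \<le> D + real i * h" using qi h by (simp add: mult_right_mono)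
      finally show ?thesis by (simp add: Sh)
    qed
    have xSi1: "S (i - 1) \<le> x"
    proof -
      have "S (i - 1) = D + (real i - 1) * h" using i1 by (simp add: Sh of_nat_diff)
      also have "\<dots> \<le> D + q * h" using qi2 h by (simp add: mult_right_mono)
      also have "\<dots> = x" using h by (simp add: q_def)
      finally show ?thesis .
    qed
    have xin: "x \<in> {S (i - 1)..S i}" using xSi xSi1 by simp
    have main: "V x \<le> \<alpha> i * (x - S (i - 1)) + V (S (i - 1))"
    proof (cases "i = 1")
      case True
      have "V x / (x - D) \<le> V (S 1) / (S 1 - D)"
        unfolding V_def by (rule V_ratio_mono[OF K sg tt x]) (use xSi True in simp)
      moreover have "S 1 - D = h" by (simp add: Sh)
      ultimately have le: "V x / (x - D) \<le> V (S 1) / h" by simp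
      have "V x = (V x / (x - D)) * (x - D)" using x by simp
      also have "\<dots> \<le> V (S 1) / h * (x - D)" using le x by (intro mult_right_mono) auto
      finally have "V x \<le> V (S 1) / h * (x - D)" .
      moreover have "\<alpha> i * (x - S (i - 1)) + V (S (i - 1)) = V (S 1) / h * (x - D)"
        using True by (simp add: alpha S0 Vle[of D])
      ultimately show ?thesis by simp
    next
      case False
      then have i2: "i \<ge> 2" using i1 by simp
      have SD1: "S (i - 1) > D" using i2 h by (simp add: Sh)
      have cv: "convex_on {S (i - 1)..S i} V"
        unfolding V_def by (rule convex_on_subset[OF V_convex[OF K sg tt]]) (use SD1 in auto)
      have "V x \<le> (V (S i) - V (S (i - 1))) / (S i - S (i - 1)) * (x - S (i - 1)) + V (S (i - 1))"
        by (rule convex_onD_Icc'[OF cv xin])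
      then show ?thesis using Sdiff[OF i1] by (simp add: alpha)
    qed
    also have "\<dots> = (\<alpha> i * (x - S (i - 1)) + V (S (i - 1))) * chi {S (i - 1)..S i} x"
      using xin by (simp add: chi_def)
    also have "\<dots> \<le> V1 x"
      unfolding V1_def
      by (rule member_le_sum[where f="\<lambda>i. (\<alpha> i * (x - S (i - 1)) + V (S (i - 1))) * chi {S (i - 1)..S i} x"])
        (use i1 iM term_nn in auto)
    also have "\<dots> = V1 x + V2 x" using False by (simp add: V2_def chi_def)
    finally show ?thesis .
  qed
  have part2: "piecewise_linear (\<lambda>x. V1 x + V2 x)"
    unfolding piecewise_linear_def
  proof (intro exI[of _ "S ` {..M}"] conjI allI impI)
    show "finite (S ` {..M})" by simp
    fix I :: "real set"
    assume a: "is_interval I \<and> I \<inter> S ` {..M} = {}"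
    have "\<forall>i\<in>{1..M}. \<exists>c. \<forall>x\<in>I. chi {S (i - 1)..S i} x = c"
    proof
      fix i assume i: "i \<in> {1..M}"
      show "\<exists>c. \<forall>x\<in>I. chi {S (i - 1)..S i} x = c"
        by (rule chi_const_Icc) (use a i in auto)
    qed
    then have "\<exists>cf. \<forall>i\<in>{1..M}. \<forall>x\<in>I. chi {S (i - 1)..S i} x = cf i"
      by (rule bchoice)
    then obtain cf where cf: "\<forall>i\<in>{1..M}. \<forall>x\<in>I. chi {S (i - 1)..S i} x = cf i"
      by blast
    obtain c2 where c2: "\<forall>x\<in>I. chi {Sstar..} x = c2"
      using chi_const_Ici[of I Sstar] a SM by auto
    show "\<exists>a b. \<forall>x\<in>I. V1 x + V2 x = a * x + b"
    proof (intro exI ballI)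
      fix x assume x: "x \<in> I"
      have "V1 x = (\<Sum>i=1..M. (\<alpha> i * (x - S (i - 1)) + V (S (i - 1))) * cf i)"
        unfolding V1_def using cf x by (intro sum.cong) auto
      also have "\<dots> = (\<Sum>i=1..M. x * (\<alpha> i * cf i) + (V (S (i - 1)) - \<alpha> i * S (i - 1)) * cf i)"
        by (intro sum.cong) (auto simp: algebra_simps)
      also have "\<dots> = x * (\<Sum>i=1..M. \<alpha> i * cf i) + (\<Sum>i=1..M. (V (S (i - 1)) - \<alpha> i * S (i - 1)) * cf i)"
        by (simp add: sum.distrib sum_distrib_left)
      finally have "V1 x = \<dots>" .
      moreover have "V2 x = x * c2 + (V Sstar - Sstar) * c2"
        using c2 x by (simp add: V2_def algebra_simps)
      ultimately show "V1 x + V2 x = ((\<Sum>i=1..M. \<alpha> i * cf i) + c2) * x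
          + ((\<Sum>i=1..M. (V (S (i - 1)) - \<alpha> i * S (i - 1)) * cf i) + (V Sstar - Sstar) * c2)"
        by (simp add: algebra_simps)
    qed
  qed
  have nn: "\<forall>x. V1 x + V2 x \<ge> 0"
  proof
    fix x show "V1 x + V2 x \<ge> 0" using V1nn[of x] V2nn[of x] by linarith
  qed
  have "\<forall>x>D. V x \<le> V1 x + V2 x" using part1 by blast
  moreover have "\<forall>x \<le> D. V x = 0" using Vle by blast
  ultimately show ?thesis using part2 nn by blast
qed

end
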